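(* Let $(A,m)$ be an iterative midpoint set with associated infinitary operation $M\colon A^\omega\to A$. Then for every doubly indexed family $(x_{ij})_{i,j\ge 0}$ of elements of $A$, \[ M_i(M_j\,x_{ij}) = M_l\; m\big(m_{l+1}(x_{0\,(l+1)},\dots,x_{l\,(l+1)},x_{ll}),\; m_{l+1}(x_{(l+1)\,0},\dots,x_{(l+1)\,l},x_{ll})\big). \]
   Context: A midpoint set is a set $A$ with $m\colon A\times A\to A$ satisfying $m(x,x)=x$, $m(x,y)=m(y,x)$, $m(m(x,y),m(z,w))=m(m(x,z),m(y,w))$. It is iterative if for every set $X$ and functions $h\colon X\to A$, $t\colon X\to X$ there is a unique $u\colon X\to A$ with $u(x)=m(h(x),u(t(x)))$; equivalently there is a (unique) $M\colon A^\omega\to A$ with $M_i\,x_i=m(x_0,M_i\,x_{i+1})$ and such that whenever $y_i=m(x_i,y_{i+1})$ for all $i$ then $y_0=M_i\,x_i$. The derived $(n+1)$-ary operations are $m_0(x)=x$ and $m_n(x_0,\dots,x_n)=m(x_0,m_{n-1}(x_1,\dots,x_n))$ for $n\ge1$. *)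

theory Defs
  imports Main
begin

definition midpoint_set :: "('a \<Rightarrow> 'a \<Rightarrow> 'a) \<Rightarrow> bool" where
  "midpoint_set m \<longleftrightarrow>
     (\<forall>x. m x x = x) \<and> (\<forall>x y. m x y = m y x) \<and>
     (\<forall>x y z w. m (m x y) (m z w) = m (m x z) (m y w))"

text \<open>M is the infinitary operation associated with an iterative midpoint set:
  M x = m (x 0) (M (shifted x)), and every solution y of y_i = m(x_i, y_{i+1}) has y_0 = M x.
  (By the equivalence stated in the paper, (A,m) is iterative iff such an M exists; it is then unique.)\<close>
definition iterative_op :: "('a \<Rightarrow> 'a \<Rightarrow> 'a) \<Rightarrow> ((nat \<Rightarrow> 'a) \<Rightarrow> 'a) \<Rightarrow> bool" where
  "iterative_op m M \<longleftrightarrow>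
     (\<forall>x. M x = m (x 0) (M (\<lambda>i. x (Suc i)))) \<and>
     (\<forall>x y. (\<forall>i. y i = m (x i) (y (Suc i))) \<longrightarrow> y 0 = M x)"

text \<open>Derived operations: for a list [x0,...,xn] of length n+1, mlist m gives m_n(x0,...,xn).\<close>
fun mlist :: "('a \<Rightarrow> 'a \<Rightarrow> 'a) \<Rightarrow> 'a list \<Rightarrow> 'a" where
  "mlist m [] = undefined"
| "mlist m [x] = x"
| "mlist m (x # y # ys) = m x (mlist m (y # ys))"

end

theory Submission
  imports Defs
begin

lemma mlist_snoc: "mlist m (xs @ [p]) = foldr m xs p"
proof (induction xs)
  case Nil then show ?case by simp
next
  case (Cons a xs)
  then show ?case by (cases xs) auto
qed

lemma foldr_med:
  assumes med: "\<And>x y z w. m (m x y) (m z w) = m (m x z) (m y w)"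
  shows "m (foldr m (map f L) p) (foldr m (map g L) q) = foldr m (map (\<lambda>a. m (f a) (g a)) L) (m p q)"
  by (induction L) (simp_all add: med)

lemma M_unfold:
  assumes "iterative_op m M"
  shows "M (\<lambda>j. a (i + j)) = m (a i) (M (\<lambda>j. a (Suc i + j)))"
proof -
  have "M (\<lambda>j. a (i + j)) = m (a (i+0)) (M (\<lambda>j. a (i + Suc j)))"
    using assms unfolding iterative_op_def by blast
  then show ?thesis by simp
qed

lemma M_m:
  assumes mp: "midpoint_set m" and it: "iterative_op m M"
  shows "M (\<lambda>i. m (a i) (b i)) = m (M a) (M b)"
proof -
  have med: "\<And>x y z w. m (m x y) (m z w) = m (m x z) (m y w)"
    using mp unfolding midpoint_set_def by blast
  define y where "y i = m (M (\<lambda>j. a (i+j))) (M (\<lambda>j. b (i+j)))" for i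
  have step: "\<forall>i. y i = m (m (a i) (b i)) (y (Suc i))"
  proof
    fix i
    show "y i = m (m (a i) (b i)) (y (Suc i))"
      unfolding y_def
      by (simp only: M_unfold[OF it, of a i] M_unfold[OF it, of b i]) (rule med)
  qed
  moreover have U: "\<And>x y. (\<forall>i. y i = m (x i) (y (Suc i))) \<Longrightarrow> y 0 = M x"
    using it unfolding iterative_op_def by blast
  have "y 0 = M (\<lambda>i. m (a i) (b i))" by (rule U[OF step])
  then show ?thesis unfolding y_def by simp
qed

theorem mainTheorem5:
  fixes m :: "'a \<Rightarrow> 'a \<Rightarrow> 'a" and M :: "(nat \<Rightarrow> 'a) \<Rightarrow> 'a"
    and x :: "nat \<Rightarrow> nat \<Rightarrow> 'a"
  assumes "midpoint_set m" and "iterative_op m M"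
  shows "M (\<lambda>i. M (\<lambda>j. x i j)) =
         M (\<lambda>l. m (mlist m (map (\<lambda>k. x k (Suc l)) [0..<Suc l] @ [x l l]))
                   (mlist m (map (\<lambda>k. x (Suc l) k) [0..<Suc l] @ [x l l])))"
proof -
  have med: "\<And>x y z w. m (m x y) (m z w) = m (m x z) (m y w)"
    and idem: "\<And>x. m x x = x" and comm: "\<And>x y. m x y = m y x"
    using assms(1) unfolding midpoint_set_def by blast+
  define Rt where "Rt a l = M (\<lambda>j. x a (Suc l + j))" for a l
  define Ct where "Ct b l = M (\<lambda>i. x (Suc l + i) b)" for b l
  define T where "T l = M (\<lambda>i. M (\<lambda>j. x (l+i) (l+j)))" for l
  have Tdec: "T l = m (m (Rt l l) (Ct l l)) (m (x l l) (T (Suc l)))" for l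
  proof -
    have "T l = m (M (\<lambda>j. x (l+0) (l+j))) (M (\<lambda>i. M (\<lambda>j. x (Suc l + i) (l+j))))"
      unfolding T_def using M_unfold[OF assms(2), of "\<lambda>i. M (\<lambda>j. x i (l+j))" l] by simp
    also have "M (\<lambda>j. x (l+0) (l+j)) = m (x l l) (Rt l l)"
      unfolding Rt_def using M_unfold[OF assms(2), of "\<lambda>j. x l j" l] by simp
    also have "(\<lambda>i. M (\<lambda>j. x (Suc l + i) (l+j))) = (\<lambda>i. m (x (Suc l + i) l) (M (\<lambda>j. x (Suc l + i) (Suc l + j))))"
      using M_unfold[OF assms(2)] by (intro ext) (metis add_0_right)
    also have "M \<dots> = m (Ct l l) (T (Suc l))"
      unfolding Ct_def T_def by (subst M_m[OF assms]) simp
    finally show ?thesis using med[of "Rt l l" "x l l" "Ct l l" "T (Suc l)"] comm[of "x l l" "Rt l l"] by simp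
  qed
  define z where "z l = m (mlist m (map (\<lambda>k. x k (Suc l)) [0..<Suc l] @ [x l l]))
                   (mlist m (map (\<lambda>k. x (Suc l) k) [0..<Suc l] @ [x l l]))" for l
  define y where "y l = m (foldr m (map (\<lambda>a. Rt a l) [0..<Suc l]) (m (x l l) (T (Suc l))))
                         (foldr m (map (\<lambda>a. Ct a l) [0..<Suc l]) (m (x l l) (T (Suc l))))" for l
  have RtS: "m (x a (Suc l)) (Rt a (Suc l)) = Rt a l" for a l
    unfolding Rt_def using M_unfold[OF assms(2), of "\<lambda>j. x a j" "Suc l"] by simp
  have CtS: "m (x (Suc l) b) (Ct b (Suc l)) = Ct b l" for b l
    unfolding Ct_def using M_unfold[OF assms(2), of "\<lambda>i. x i b" "Suc l"] by simp
  have rec: "\<forall>l. y l = m (z l) (y (Suc l))"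
  proof
    fix l
    let ?u = "m (x (Suc l) (Suc l)) (T (Suc (Suc l)))"
    let ?p = "m (x l l) (m (Rt (Suc l) (Suc l)) ?u)"
    let ?q = "m (x l l) (m (Ct (Suc l) (Suc l)) ?u)"
    let ?w = "m (x l l) (T (Suc l))"
    have pq: "m ?p ?q = m ?w ?w"
    proof -
      have "m ?p ?q = m (x l l) (m (m (Rt (Suc l) (Suc l)) ?u) (m (Ct (Suc l) (Suc l)) ?u))"
        by (subst med) (simp only: idem)
      also have "\<dots> = m (x l l) (m (m (Rt (Suc l) (Suc l)) (Ct (Suc l) (Suc l))) ?u)"
        by (subst med[of "Rt (Suc l) (Suc l)" ?u "Ct (Suc l) (Suc l)" ?u]) (simp only: idem)
      also have "\<dots> = ?w" using Tdec[of "Suc l"] by simp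
      finally show ?thesis by (simp add: idem)
    qed
    have y1: "y (Suc l) = m (foldr m (map (\<lambda>a. Rt a (Suc l)) [0..<Suc l]) (m (Rt (Suc l) (Suc l)) ?u))
                         (foldr m (map (\<lambda>a. Ct a (Suc l)) [0..<Suc l]) (m (Ct (Suc l) (Suc l)) ?u))"
      unfolding y_def by simp
    have "m (z l) (y (Suc l)) =
       m (m (foldr m (map (\<lambda>k. x k (Suc l)) [0..<Suc l]) (x l l))
            (foldr m (map (\<lambda>a. Rt a (Suc l)) [0..<Suc l]) (m (Rt (Suc l) (Suc l)) ?u)))
         (m (foldr m (map (\<lambda>k. x (Suc l) k) [0..<Suc l]) (x l l))
            (foldr m (map (\<lambda>a. Ct a (Suc l)) [0..<Suc l]) (m (Ct (Suc l) (Suc l)) ?u)))"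
      unfolding z_def y1 mlist_snoc by (rule med)
    also have "\<dots> = m (foldr m (map (\<lambda>a. Rt a l) [0..<Suc l]) ?p)
                      (foldr m (map (\<lambda>a. Ct a l) [0..<Suc l]) ?q)"
      by (simp only: foldr_med[where m=m, OF med] RtS CtS)
    also have "\<dots> = foldr m (map (\<lambda>a. m (Rt a l) (Ct a l)) [0..<Suc l]) (m ?p ?q)"
      by (simp only: foldr_med[where m=m, OF med])
    also have "\<dots> = foldr m (map (\<lambda>a. m (Rt a l) (Ct a l)) [0..<Suc l]) (m ?w ?w)"
      using pq by simp
    also have "\<dots> = y l"
      unfolding y_def by (simp only: foldr_med[where m=m, OF med])
    finally show "y l = m (z l) (y (Suc l))" by simp
  qed
  moreover have U: "\<And>x y. (\<forall>i. y i = m (x i) (y (Suc i))) \<Longrightarrow> y 0 = M x"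
    using assms(2) unfolding iterative_op_def by blast
  ultimately have "y 0 = M z" by blast
  moreover have "y 0 = T 0"
  proof -
    have "y 0 = m (m (Rt 0 0) (m (x 0 0) (T 1))) (m (Ct 0 0) (m (x 0 0) (T 1)))"
      unfolding y_def by simp
    also have "\<dots> = m (m (Rt 0 0) (Ct 0 0)) (m (x 0 0) (T 1))"
      using med[of "Rt 0 0" "m (x 0 0) (T 1)" "Ct 0 0" "m (x 0 0) (T 1)"] idem[of "m (x 0 0) (T 1)"] by simp
    also have "\<dots> = T 0" using Tdec[of 0] by simp
    finally show ?thesis .
  qed
  ultimately show ?thesis unfolding T_def z_def by simp
qed

end
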